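(* Let $U\subset\operatorname{int}(\mathbb{R}^k_+)$ be a compact set containing a nonempty open set, and let $\lambda_0>1$ be defined by $\ln\lambda_0=\max_{x,y\in U}d_T(x,y)$. Let $f\colon\operatorname{int}(\mathbb{R}^k_+)\to\operatorname{int}(\mathbb{R}^k_+)$ be monotonic ($x\le y\Rightarrow f(x)\le f(y)$). If there exists $c\in[0,1)$ such that $f(\lambda x)\le\lambda^c f(x)$ for all $x\in U$ and all $\lambda\in(1,\lambda_0]$, then $d_T(f(x),f(y))\le c\,d_T(x,y)$ for all $x,y\in U$.
   Context: $\operatorname{int}(\mathbb{R}^k_+)$ is the set of vectors in $\mathbb{R}^k$ with strictly positive coordinates; $x\le y$ means $y-x$ has nonnegative coordinates. Thompson's metric: $d_T(x,y)=\ln\max\{M(x,y),M(y,x)\}$ with $M(x,y)=\inf\{\beta>0: x\le\beta y\}$. Compactness and openness refer to the usual topology of $\mathbb{R}^k$ (equivalently, for compactness, to the topology of $d_T$). *)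

theory Defs
  imports "HOL-Analysis.Analysis"
begin

definition pos_int :: "(real ^ 'k) set" where
  "pos_int = {x. \<forall>i. 0 < x $ i}"

definition cle :: "real ^ 'k \<Rightarrow> real ^ 'k \<Rightarrow> bool" where
  "cle x y \<longleftrightarrow> (\<forall>i. x $ i \<le> y $ i)"

definition Mfun :: "real ^ 'k \<Rightarrow> real ^ 'k \<Rightarrow> real" where
  "Mfun x y = Inf {\<beta>. 0 < \<beta> \<and> cle x (\<beta> *\<^sub>R y)}"

definition thompson :: "real ^ 'k \<Rightarrow> real ^ 'k \<Rightarrow> real" where
  "thompson x y = ln (max (Mfun x y) (Mfun y x))"

end

theory Submission
  imports Defs
begin

lemma M_eq:
  fixes x y :: "real ^ 'k"
  assumes "x \<in> pos_int" "y \<in> pos_int"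
  shows "Mfun x y = Max (range (\<lambda>i. x$i / y$i))"
proof -
  let ?m = "Max (range (\<lambda>i. x$i / y$i))"
  have fin: "finite (range (\<lambda>i. x$i / y$i))" by simp
  have ge: "x$i / y$i \<le> ?m" for i by (rule Max_ge[OF fin]) auto
  obtain i0 where i0: "?m = x$i0 / y$i0" using Max_in[OF fin] by (metis (no_types, lifting) UNIV_not_empty empty_is_image imageE)
  have mpos: "0 < ?m" using i0 assms unfolding pos_int_def by auto
  have "{\<beta>. 0 < \<beta> \<and> cle x (\<beta> *\<^sub>R y)} = {?m..}"
  proof (intro set_eqI iffI)
    fix b assume "b \<in> {\<beta>. 0 < \<beta> \<and> cle x (\<beta> *\<^sub>R y)}"
    hence b: "0 < b" "\<forall>i. x$i \<le> b * y$i" unfolding cle_def by auto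
    have "x$i / y$i \<le> b" for i using b assms unfolding pos_int_def
      by (simp add: divide_le_eq)
    hence "?m \<le> b" by (subst Max_le_iff[OF fin]) auto
    thus "b \<in> {?m..}" by simp
  next
    fix b assume "b \<in> {?m..}"
    hence b: "?m \<le> b" by simp
    have "x$i \<le> b * y$i" for i
    proof -
      have "x$i / y$i \<le> b" using ge[of i] b by linarith
      thus ?thesis using assms unfolding pos_int_def by (simp add: divide_le_eq)
    qed
    moreover have "0 < b" using b mpos by linarith
    ultimately show "b \<in> {\<beta>. 0 < \<beta> \<and> cle x (\<beta> *\<^sub>R y)}" unfolding cle_def by (simp add: mult.commute)
  qed
  thus ?thesis unfolding Mfun_def by simp
qed

lemma M_pos:
  fixes x y :: "real ^ 'k"
  assumes "x \<in> pos_int" "y \<in> pos_int"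
  shows "0 < Mfun x y"
proof -
  have "x$i / y$i \<le> Mfun x y" for i unfolding M_eq[OF assms] by (rule Max_ge) auto
  moreover have "0 < x$i / y$i" for i using assms unfolding pos_int_def by auto
  ultimately show ?thesis by (meson less_le_trans)
qed

lemma M_ge:
  fixes x y :: "real ^ 'k"
  assumes "x \<in> pos_int" "y \<in> pos_int"
  shows "x$i / y$i \<le> Mfun x y"
  unfolding M_eq[OF assms] by (rule Max_ge) auto

lemma M_le:
  fixes x y :: "real ^ 'k"
  assumes "x \<in> pos_int" "y \<in> pos_int" "\<And>i. x$i / y$i \<le> b"
  shows "Mfun x y \<le> b"
  unfolding M_eq[OF assms(1,2)] using assms(3) by (subst Max_le_iff) auto

theorem corollary3:
  fixes U :: "(real ^ 'k) set" and f :: "real ^ 'k \<Rightarrow> real ^ 'k"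
    and lam0 c :: real
  assumes U_sub: "U \<subseteq> pos_int"
    and U_compact: "compact U"
    and U_open: "\<exists>V. open V \<and> V \<noteq> {} \<and> V \<subseteq> U"
    and lam0_def: "lam0 = exp (Sup {thompson x y | x y. x \<in> U \<and> y \<in> U})"
    and f_maps: "\<forall>x\<in>pos_int. f x \<in> pos_int"
    and f_mono: "\<forall>x\<in>pos_int. \<forall>y\<in>pos_int. cle x y \<longrightarrow> cle (f x) (f y)"
    and c: "0 \<le> c" "c < 1"
    and hom: "\<forall>x\<in>U. \<forall>t. 1 < t \<and> t \<le> lam0 \<longrightarrow> cle (f (t *\<^sub>R x)) (t powr c *\<^sub>R f x)"
  shows "\<forall>x\<in>U. \<forall>y\<in>U. thompson (f x) (f y) \<le> c * thompson x y"
proof (cases "U = {}")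
  case True thus ?thesis by simp
next
  case ne: False
  have lowi: "\<exists>m>0. \<forall>x\<in>U. m \<le> x$i" for i
  proof -
    have "continuous_on U (\<lambda>x. x$i)" by (intro continuous_intros)
    hence "compact ((\<lambda>x. x$i) ` U)" using U_compact by (rule compact_continuous_image)
    then obtain s where s: "s \<in> (\<lambda>x. x$i) ` U" "\<forall>t\<in>(\<lambda>x. x$i) ` U. s \<le> t"
      using compact_attains_inf ne by blast
    have "0 < s" using s(1) U_sub unfolding pos_int_def by auto
    thus ?thesis using s(2) by auto
  qed
  then obtain mf where mf: "\<And>i. 0 < mf i" "\<And>i x. x \<in> U \<Longrightarrow> mf i \<le> x$i" by metis
  define m where "m = Min (range mf)"
  have m0: "0 < m" unfolding m_def using mf(1) by (subst Min_gr_iff) auto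
  have mle: "m \<le> x$i" if "x \<in> U" for x i
  proof -
    have "m \<le> mf i" unfolding m_def by (rule Min_le) auto
    thus ?thesis using mf(2)[OF that, of i] by linarith
  qed
  obtain B where B: "\<forall>x\<in>U. norm x \<le> B"
    using compact_imp_bounded[OF U_compact] bounded_iff by blast
  have Ble: "x$i \<le> B" if "x \<in> U" for x i
    using B that component_le_norm_cart[of x i] by force
  have Mbd: "Mfun x y \<le> B / m" if "x \<in> U" "y \<in> U" for x y
  proof (rule M_le)
    show "x \<in> pos_int" "y \<in> pos_int" using that U_sub by auto
    fix i
    have xp: "0 < x$i" "0 < y$i" using that U_sub unfolding pos_int_def by auto
    show "x$i / y$i \<le> B / m"
      by (rule frac_le) (use xp Ble[OF that(1), of i] mle[OF that(2)] m0 in auto)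
  qed
  have bdd: "bdd_above {thompson x y | x y. x \<in> U \<and> y \<in> U}"
  proof (rule bdd_aboveI)
    fix z assume "z \<in> {thompson x y | x y. x \<in> U \<and> y \<in> U}"
    then obtain x y where xy: "x \<in> U" "y \<in> U" "z = thompson x y" by auto
    have p: "x \<in> pos_int" "y \<in> pos_int" using xy U_sub by auto
    have "max (Mfun x y) (Mfun y x) \<le> B / m" using Mbd xy by auto
    thus "z \<le> ln (B / m)" unfolding xy thompson_def
      using M_pos[OF p] by (subst ln_le_cancel_iff) auto
  qed
  show ?thesis
  proof (intro ballI)
    fix x y assume xU: "x \<in> U" and yU: "y \<in> U"
    have p: "x \<in> pos_int" "y \<in> pos_int" using xU yU U_sub by auto
    have fp: "f x \<in> pos_int" "f y \<in> pos_int" using p f_maps by auto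
    define l where "l = max (Mfun x y) (Mfun y x)"
    have lpos: "0 < l" using M_pos[OF p] l_def by auto
    have th: "thompson x y = ln l" unfolding thompson_def l_def ..
    have "thompson x y \<le> Sup {thompson x y | x y. x \<in> U \<and> y \<in> U}"
      by (rule cSup_upper[OF _ bdd]) (use xU yU in auto)
    moreover have "l = exp (thompson x y)" using th lpos by simp
    ultimately have l0: "l \<le> lam0" unfolding lam0_def by simp
    have xl: "x$i \<le> l * y$i" "y$i \<le> l * x$i" for i
    proof -
      have "x$i / y$i \<le> l" "y$i / x$i \<le> l" using M_ge[OF p, of i] M_ge[OF p(2,1), of i] l_def by auto
      thus "x$i \<le> l * y$i" "y$i \<le> l * x$i" using p unfolding pos_int_def by (auto simp: divide_le_eq)
    qed
    have l1: "1 \<le> l"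
    proof (rule ccontr)
      assume "\<not> 1 \<le> l"
      obtain i :: 'k where True by auto
      have "x$i \<le> l * y$i" "y$i \<le> l * x$i" using xl by auto
      moreover have "0 < x$i" "0 < y$i" using p unfolding pos_int_def by auto
      moreover have "l * y$i < 1 * y$i" "l * x$i < 1 * x$i"
        using \<open>\<not> 1 \<le> l\<close> \<open>0 < x$i\<close> \<open>0 < y$i\<close>
        by (auto intro!: mult_strict_right_mono)
      ultimately show False by linarith
    qed
    show "thompson (f x) (f y) \<le> c * thompson x y"
    proof (cases "l = 1")
      case True
      have "x = y" using xl True by (simp add: vec_eq_iff order_antisym)
      have "Mfun (f x) (f x) \<le> 1" by (rule M_le) (use fp in \<open>auto simp: pos_int_def\<close>)
      moreover have "1 \<le> Mfun (f x) (f x)"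
      proof -
        obtain i :: 'k where True by auto
        have "f x $ i / f x $ i \<le> Mfun (f x) (f x)" by (rule M_ge[OF fp(1) fp(1)])
        moreover have "f x $ i \<noteq> 0" using fp unfolding pos_int_def by (metis less_irrefl mem_Collect_eq)
        ultimately show ?thesis by simp
      qed
      ultimately have "Mfun (f x) (f x) = 1" by simp
      hence "thompson (f x) (f y) = 0" unfolding thompson_def \<open>x = y\<close> by simp
      moreover have "thompson x y = 0" using th True by simp
      ultimately show ?thesis by simp
    next
      case False
      hence l1': "1 < l" using l1 by simp
      have key: "f a $ i / f b $ i \<le> l powr c" if ab: "a \<in> U" "b \<in> U" "\<And>i. a$i \<le> l * b$i" for a b i
      proof -
        have ap: "a \<in> pos_int" "b \<in> pos_int" using ab U_sub by auto
        have lb: "l *\<^sub>R b \<in> pos_int" using ap lpos unfolding pos_int_def by auto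
        have "cle a (l *\<^sub>R b)" using ab unfolding cle_def by auto
        hence "cle (f a) (f (l *\<^sub>R b))" using f_mono ap lb by auto
        moreover have "cle (f (l *\<^sub>R b)) (l powr c *\<^sub>R f b)" using hom ab l1' l0 by auto
        ultimately have "f a $ i \<le> l powr c * f b $ i" unfolding cle_def by (simp add: order_trans[of _ "f (l *\<^sub>R b) $ i"])
        moreover have "0 < f b $ i" using ap f_maps unfolding pos_int_def by auto
        ultimately show ?thesis by (simp add: divide_le_eq)
      qed
      have "Mfun (f x) (f y) \<le> l powr c" by (rule M_le[OF fp]) (rule key[OF xU yU xl(1)])
      moreover have "Mfun (f y) (f x) \<le> l powr c" by (rule M_le[OF fp(2,1)]) (rule key[OF yU xU xl(2)])
      ultimately have "max (Mfun (f x) (f y)) (Mfun (f y) (f x)) \<le> l powr c" by simp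
      moreover have "0 < max (Mfun (f x) (f y)) (Mfun (f y) (f x))" using M_pos[OF fp] by auto
      ultimately have "thompson (f x) (f y) \<le> ln (l powr c)" unfolding thompson_def
        by (subst ln_le_cancel_iff) auto
      also have "\<dots> = c * ln l" using lpos by (simp add: ln_powr)
      finally show ?thesis unfolding th .
    qed
  qed
qed

end
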